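(* Let $(G,\cdot)$ be a WIPL with identity $e$, let $(H,\circ)$ be a WIPL with identity $e'$, and let $(A,B,C)$ be an isotopism from $(G,\cdot)$ to $(H,\circ)$. Put $a'=eA$ and $b'=eB$. Assume that either $(x\circ y)^{\rho'}=x^{\rho'}\circ y^{\lambda'}$ for all $x,y\in H$, or $(x\circ y)^{\lambda'}=x^{\lambda'}\circ y^{\rho'}$ for all $x,y\in H$. Then $C$ is an isomorphism from $(G,\cdot)$ onto $(H,\circ)$ if and only if $(L_{b'}',R_{a'}',I)\in AUT(H,\circ)$. Moreover, in that case $(G,\cdot)$ and $(H,\circ)$ are (isomorphic) cross inverse property loops, $R_{a'}'L_{b'}'=I$ and $b'\circ a'=e'$.
   Context: Maps are written on the right of their arguments ($xU$) and composed left to right: $UV$ means first apply $U$, then $V$; $I$ is the identity map. For a loop $(L,\cdot)$ with identity $e$, $x^\rho$ and $x^\lambda$ denote the right and left inverses of $x$ ($x x^\rho=e=x^\lambda x$). For the loop $(H,\circ)$ with identity $e'$, $y^{\rho'}$, $y^{\lambda'}$ are the right and left inverses of $y$ in $H$, and $L_y':z\mapsto y\circ z$, $R_y':z\mapsto z\circ y$. $L$ is a weak inverse property loop (WIPL) if $xy\cdot z=e$ implies $x\cdot yz=e$ for all $x,y,z\in L$; it is a cross inverse property loop (CIPL) if $xy\cdot x^\rho=y$ for all $x,y\in L$. A triple $(U,V,W)$ of bijections $G\to H$ between loops $(G,\cdot)$ and $(H,\circ)$ is an isotopism if $xU\circ yV=(x\cdot y)W$ for all $x,y\in G$; an autotopism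 is an isotopism of a loop to itself, and $AUT(H,\circ)$ denotes the group of autotopisms under componentwise composition. *)

theory Defs
  imports Main
begin

definition loop :: "'a set \<Rightarrow> ('a \<Rightarrow> 'a \<Rightarrow> 'a) \<Rightarrow> 'a \<Rightarrow> bool" where
  "loop S op e \<longleftrightarrow>
     (\<forall>x\<in>S. \<forall>y\<in>S. op x y \<in> S) \<and> e \<in> S \<and>
     (\<forall>x\<in>S. op e x = x \<and> op x e = x) \<and>
     (\<forall>a\<in>S. \<forall>b\<in>S. (\<exists>!x. x \<in> S \<and> op a x = b) \<and> (\<exists>!y. y \<in> S \<and> op y a = b))"

definition rinv :: "'a set \<Rightarrow> ('a \<Rightarrow> 'a \<Rightarrow> 'a) \<Rightarrow> 'a \<Rightarrow> 'a \<Rightarrow> 'a" where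
  "rinv S op e x = (THE y. y \<in> S \<and> op x y = e)"

definition linv :: "'a set \<Rightarrow> ('a \<Rightarrow> 'a \<Rightarrow> 'a) \<Rightarrow> 'a \<Rightarrow> 'a \<Rightarrow> 'a" where
  "linv S op e x = (THE y. y \<in> S \<and> op y x = e)"

definition WIPL :: "'a set \<Rightarrow> ('a \<Rightarrow> 'a \<Rightarrow> 'a) \<Rightarrow> 'a \<Rightarrow> bool" where
  "WIPL S op e \<longleftrightarrow> loop S op e \<and>
     (\<forall>x\<in>S. \<forall>y\<in>S. \<forall>z\<in>S. op (op x y) z = e \<longrightarrow> op x (op y z) = e)"

definition CIPL :: "'a set \<Rightarrow> ('a \<Rightarrow> 'a \<Rightarrow> 'a) \<Rightarrow> 'a \<Rightarrow> bool" where
  "CIPL S op e \<longleftrightarrow> loop S op e \<and>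
     (\<forall>x\<in>S. \<forall>y\<in>S. op (op x y) (rinv S op e x) = y)"

definition isotopism ::
  "'a set \<Rightarrow> ('a \<Rightarrow> 'a \<Rightarrow> 'a) \<Rightarrow> 'b set \<Rightarrow> ('b \<Rightarrow> 'b \<Rightarrow> 'b) \<Rightarrow>
   ('a \<Rightarrow> 'b) \<Rightarrow> ('a \<Rightarrow> 'b) \<Rightarrow> ('a \<Rightarrow> 'b) \<Rightarrow> bool" where
  "isotopism G op H op' U V W \<longleftrightarrow>
     bij_betw U G H \<and> bij_betw V G H \<and> bij_betw W G H \<and>
     (\<forall>x\<in>G. \<forall>y\<in>G. op' (U x) (V y) = W (op x y))"

definition autotopism ::
  "'b set \<Rightarrow> ('b \<Rightarrow> 'b \<Rightarrow> 'b) \<Rightarrow> ('b \<Rightarrow> 'b) \<Rightarrow> ('b \<Rightarrow> 'b) \<Rightarrow> ('b \<Rightarrow> 'b) \<Rightarrow> bool" where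
  "autotopism H op U V W \<longleftrightarrow> isotopism H op H op U V W"

definition loop_isomorphism ::
  "'a set \<Rightarrow> ('a \<Rightarrow> 'a \<Rightarrow> 'a) \<Rightarrow> 'b set \<Rightarrow> ('b \<Rightarrow> 'b \<Rightarrow> 'b) \<Rightarrow> ('a \<Rightarrow> 'b) \<Rightarrow> bool" where
  "loop_isomorphism G op H op' C \<longleftrightarrow>
     bij_betw C G H \<and> (\<forall>x\<in>G. \<forall>y\<in>G. C (op x y) = op' (C x) (C y))"

end

theory Submission
  imports Defs
begin


locale lp =
  fixes S :: "'a set" and op :: "'a \<Rightarrow> 'a \<Rightarrow> 'a" and e :: 'a
  assumes lp: "loop S op e"
begin

abbreviation "ri \<equiv> rinv S op e"
abbreviation "li \<equiv> linv S op e"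

lemma closed: "x \<in> S \<Longrightarrow> y \<in> S \<Longrightarrow> op x y \<in> S"
  using lp unfolding loop_def by blast
lemma unit: "e \<in> S" using lp unfolding loop_def by blast
lemma lid[simp]: "x \<in> S \<Longrightarrow> op e x = x" using lp unfolding loop_def by blast
lemma rid[simp]: "x \<in> S \<Longrightarrow> op x e = x" using lp unfolding loop_def by blast

lemma divs: "\<forall>a\<in>S. \<forall>b\<in>S. (\<exists>!x. x \<in> S \<and> op a x = b) \<and> (\<exists>!y. y \<in> S \<and> op y a = b)"
  using lp unfolding loop_def by (elim conjE)

lemma lcancel: "a \<in> S \<Longrightarrow> x \<in> S \<Longrightarrow> y \<in> S \<Longrightarrow> op a x = op a y \<Longrightarrow> x = y"
proof -
  assume h: "a \<in> S" "x \<in> S" "y \<in> S" "op a x = op a y"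
  have "op a x \<in> S" using closed h by blast
  hence u: "\<exists>!z. z \<in> S \<and> op a z = op a x" by (rule conjunct1[OF bspec[OF bspec[OF divs h(1)]]])
  show ?thesis
  proof (rule ex1E[OF u])
    fix z assume all: "\<forall>w. w \<in> S \<and> op a w = op a x \<longrightarrow> w = z"
    have "x = z" by (rule all[rule_format]) (simp add: h(2))
    moreover have "y = z" by (rule all[rule_format]) (simp add: h(3) h(4))
    ultimately show ?thesis by simp
  qed
qed

lemma rcancel: "a \<in> S \<Longrightarrow> x \<in> S \<Longrightarrow> y \<in> S \<Longrightarrow> op x a = op y a \<Longrightarrow> x = y"
proof -
  assume h: "a \<in> S" "x \<in> S" "y \<in> S" "op x a = op y a"
  have "op x a \<in> S" using closed h by blast
  hence u: "\<exists>!z. z \<in> S \<and> op z a = op x a" by (rule conjunct2[OF bspec[OF bspec[OF divs h(1)]]])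
  show ?thesis
  proof (rule ex1E[OF u])
    fix z assume all: "\<forall>w. w \<in> S \<and> op w a = op x a \<longrightarrow> w = z"
    have "x = z" by (rule all[rule_format]) (simp add: h(2))
    moreover have "y = z" by (rule all[rule_format]) (simp add: h(3) h(4))
    ultimately show ?thesis by simp
  qed
qed

lemma ldiv: assumes "a \<in> S" "b \<in> S" shows "\<exists>x\<in>S. op a x = b"
proof -
  have "\<exists>!x. x \<in> S \<and> op a x = b" by (rule conjunct1[OF bspec[OF bspec[OF divs assms(1)] assms(2)]])
  hence "\<exists>x. x \<in> S \<and> op a x = b" by (rule ex1_implies_ex)
  thus ?thesis by blast
qed
lemma rdiv: assumes "a \<in> S" "b \<in> S" shows "\<exists>x\<in>S. op x a = b"
proof -
  have "\<exists>!x. x \<in> S \<and> op x a = b" by (rule conjunct2[OF bspec[OF bspec[OF divs assms(1)] assms(2)]])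
  hence "\<exists>x. x \<in> S \<and> op x a = b" by (rule ex1_implies_ex)
  thus ?thesis by blast
qed

lemma rinv: "x \<in> S \<Longrightarrow> ri x \<in> S \<and> op x (ri x) = e"
proof -
  assume "x \<in> S"
  hence "\<exists>!y. y \<in> S \<and> op x y = e" by (rule conjunct1[OF bspec[OF bspec[OF divs] unit]])
  thus ?thesis unfolding rinv_def by (rule theI')
qed

lemma rinv_eq: "x \<in> S \<Longrightarrow> y \<in> S \<Longrightarrow> op x y = e \<Longrightarrow> ri x = y"
proof -
  assume h: "x \<in> S" "y \<in> S" "op x y = e"
  have r: "ri x \<in> S" "op x (ri x) = e" using rinv[OF h(1)] by auto
  show ?thesis by (rule lcancel[OF h(1) r(1) h(2)]) (simp add: r(2) h(3))
qed

lemma linv: "x \<in> S \<Longrightarrow> li x \<in> S \<and> op (li x) x = e"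
proof -
  assume "x \<in> S"
  hence "\<exists>!y. y \<in> S \<and> op y x = e" by (rule conjunct2[OF bspec[OF bspec[OF divs] unit]])
  thus ?thesis unfolding linv_def by (rule theI')
qed

lemma linv_eq: "x \<in> S \<Longrightarrow> y \<in> S \<Longrightarrow> op y x = e \<Longrightarrow> li x = y"
proof -
  assume h: "x \<in> S" "y \<in> S" "op y x = e"
  have r: "li x \<in> S" "op (li x) x = e" using linv[OF h(1)] by auto
  show ?thesis by (rule rcancel[OF h(1) r(1) h(2)]) (simp add: r(2) h(3))
qed

lemma ri_li: "u \<in> S \<Longrightarrow> ri (li u) = u" using linv[of u] rinv_eq[of "li u" u] by blast
lemma li_ri: "u \<in> S \<Longrightarrow> li (ri u) = u" using rinv[of u] linv_eq[of "ri u" u] by blast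

lemma bijL: "b \<in> S \<Longrightarrow> bij_betw (\<lambda>z. op b z) S S"
proof -
  assume b: "b \<in> S"
  have "inj_on (\<lambda>z. op b z) S" unfolding inj_on_def using lcancel b by blast
  moreover have "(\<lambda>z. op b z) ` S = S"
  proof
    show "(\<lambda>z. op b z) ` S \<subseteq> S" using closed b by blast
    show "S \<subseteq> (\<lambda>z. op b z) ` S"
    proof
      fix y assume "y \<in> S"
      then obtain x where "x \<in> S" "op b x = y" using ldiv b by blast
      thus "y \<in> (\<lambda>z. op b z) ` S" by blast
    qed
  qed
  ultimately show ?thesis unfolding bij_betw_def by blast
qed
lemma bijR: "b \<in> S \<Longrightarrow> bij_betw (\<lambda>z. op z b) S S"
proof -
  assume b: "b \<in> S"
  have "inj_on (\<lambda>z. op z b) S" unfolding inj_on_def using rcancel b by blast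
  moreover have "(\<lambda>z. op z b) ` S = S"
  proof
    show "(\<lambda>z. op z b) ` S \<subseteq> S" using closed b by blast
    show "S \<subseteq> (\<lambda>z. op z b) ` S"
    proof
      fix y assume "y \<in> S"
      then obtain x where "x \<in> S" "op x b = y" using rdiv b by blast
      thus "y \<in> (\<lambda>z. op z b) ` S" by blast
    qed
  qed
  ultimately show ?thesis unfolding bij_betw_def by blast
qed

end

locale wl = lp +
  assumes wip: "\<And>x y z. x \<in> S \<Longrightarrow> y \<in> S \<Longrightarrow> z \<in> S \<Longrightarrow> op (op x y) z = e \<Longrightarrow> op x (op y z) = e"
begin

lemma conv: "x \<in> S \<Longrightarrow> y \<in> S \<Longrightarrow> z \<in> S \<Longrightarrow> op x (op y z) = e \<Longrightarrow> op (op x y) z = e"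
proof -
  assume h: "x \<in> S" "y \<in> S" "z \<in> S" "op x (op y z) = e"
  define c where "c = ri (op x y)"
  have c: "c \<in> S" "op (op x y) c = e" using rinv closed h c_def by auto
  hence "op x (op y c) = e" using wip h by blast
  hence "ri x = op y c" using h c closed rinv_eq by blast
  moreover have "ri x = op y z" using h closed rinv_eq by blast
  ultimately have "op y c = op y z" by simp
  hence "c = z" using lcancel h c by blast
  thus ?thesis using c by simp
qed

lemma case1:
  assumes i: "\<forall>x\<in>S. \<forall>y\<in>S. ri (op x y) = op (ri x) (li y)"
  shows "(\<forall>x\<in>S. li x = ri x) \<and> (\<forall>x\<in>S. \<forall>y\<in>S. op (op x y) (ri x) = y)"
proof -
  have wr: "op y (ri (op x y)) = ri x" if "x \<in> S" "y \<in> S" for x y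
  proof -
    have "op (op x y) (ri (op x y)) = e" "ri (op x y) \<in> S" using rinv closed that by auto
    hence "op x (op y (ri (op x y))) = e" using wip that by blast
    thus ?thesis using rinv_eq[of x "op y (ri (op x y))"] that closed \<open>ri (op x y) \<in> S\<close> by simp
  qed
  have k: "op y (op u (li y)) = u" if "y \<in> S" "u \<in> S" for y u
  proof -
    have "li u \<in> S" using linv that by blast
    have "op y (ri (op (li u) y)) = ri (li u)" using wr that \<open>li u \<in> S\<close> by blast
    also have "ri (li u) = u" using ri_li that by blast
    finally have "op y (ri (op (li u) y)) = u" .
    moreover have "ri (op (li u) y) = op u (li y)" using i that \<open>li u \<in> S\<close> ri_li by simp
    ultimately show ?thesis by simp
  qed
  have eq: "li x = ri x" if "x \<in> S" for x
    using k[OF that unit] that linv rinv_eq[of x "li x"] unit by auto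
  moreover have "op (op x y) (ri x) = y" if "x \<in> S" "y \<in> S" for x y
  proof -
    have "op x (op (op x y) (li x)) = op x y" using k that closed by blast
    hence "op (op x y) (li x) = y" using lcancel[of x "op (op x y) (li x)" y] that closed linv by simp
    thus ?thesis using eq that by simp
  qed
  ultimately show ?thesis by blast
qed

lemma case2:
  assumes i: "\<forall>x\<in>S. \<forall>y\<in>S. li (op x y) = op (li x) (ri y)"
  shows "(\<forall>x\<in>S. li x = ri x) \<and> (\<forall>x\<in>S. \<forall>y\<in>S. op (op x y) (ri x) = y)"
proof -
  have wl: "op (li (op x y)) x = li y" if "x \<in> S" "y \<in> S" for x y
  proof -
    have "op (li (op x y)) (op x y) = e" "li (op x y) \<in> S" using linv closed that by auto
    hence "op (op (li (op x y)) x) y = e" using conv that by blast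
    thus ?thesis using linv_eq[of y "op (li (op x y)) x"] that closed \<open>li (op x y) \<in> S\<close> by simp
  qed
  have k: "op (op x (ri y)) (ri x) = li y" if "x \<in> S" "y \<in> S" for x y
  proof -
    have "ri x \<in> S" using rinv that by blast
    have "op (li (op (ri x) y)) (ri x) = li y" using wl that \<open>ri x \<in> S\<close> by blast
    thus ?thesis using i that \<open>ri x \<in> S\<close> li_ri by simp
  qed
  have eq: "li x = ri x" if "x \<in> S" for x
    using k[OF that that] that rinv by auto
  moreover have "op (op x w) (ri x) = w" if "x \<in> S" "w \<in> S" for x w
  proof -
    have "li w \<in> S" using linv that by blast
    have "op (op x (ri (li w))) (ri x) = li (li w)" using k that \<open>li w \<in> S\<close> by blast
    thus ?thesis using ri_li eq[of "li w"] that \<open>li w \<in> S\<close> by simp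
  qed
  ultimately show ?thesis by blast
qed

end

locale cl = lp +
  assumes lr: "\<And>x. x \<in> S \<Longrightarrow> li x = ri x"
    and cip: "\<And>x y. x \<in> S \<Longrightarrow> y \<in> S \<Longrightarrow> op (op x y) (ri x) = y"
begin

lemma ri_in: "x \<in> S \<Longrightarrow> ri x \<in> S" using rinv by blast
lemma J2: "x \<in> S \<Longrightarrow> ri (ri x) = x" using li_ri[of x] lr[of "ri x"] ri_in[of x] by simp
lemma Jinj: assumes "x \<in> S" "y \<in> S" "ri x = ri y" shows "x = y"
proof -
  have "x = ri (ri x)" using J2[OF assms(1)] by (rule sym)
  also have "\<dots> = ri (ri y)" using assms(3) by (rule arg_cong)
  also have "\<dots> = y" using J2[OF assms(2)] .
  finally show ?thesis .
qed
lemma cipb: "x \<in> S \<Longrightarrow> y \<in> S \<Longrightarrow> op x (op y (ri x)) = y"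
proof -
  assume h: "x \<in> S" "y \<in> S"
  have w: "op y (ri x) \<in> S" using closed ri_in h by blast
  have "op (op x (op y (ri x))) (ri x) = op y (ri x)" using cip h w by blast
  thus ?thesis using rcancel[of "ri x" "op x (op y (ri x))" y] ri_in h w closed by simp
qed
lemma Jhom: "x \<in> S \<Longrightarrow> y \<in> S \<Longrightarrow> ri (op x y) = op (ri x) (ri y)"
proof -
  assume h: "x \<in> S" "y \<in> S"
  define z where "z = op x y"
  have z: "z \<in> S" using z_def closed h by blast
  have 1: "op z (ri x) = y" using cip h z_def by blast
  have "op (op z (ri x)) (ri z) = ri x" using cip z ri_in h by blast
  hence 2: "op y (ri z) = ri x" using 1 by simp
  have "op (op y (ri z)) (ri y) = ri z" using cip h ri_in z by blast
  thus ?thesis using 2 z_def by simp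
qed

end


theorem mainTheorem5:
  fixes G :: "'a set" and opG :: "'a \<Rightarrow> 'a \<Rightarrow> 'a" and e :: 'a
    and H :: "'b set" and opH :: "'b \<Rightarrow> 'b \<Rightarrow> 'b" and e' :: 'b
    and A B C :: "'a \<Rightarrow> 'b" and a' b' :: 'b
  assumes wG: "WIPL G opG e"
    and wH: "WIPL H opH e'"
    and iso: "isotopism G opG H opH A B C"
    and a'_def: "a' = A e"
    and b'_def: "b' = B e"
    and inv: "(\<forall>x\<in>H. \<forall>y\<in>H. rinv H opH e' (opH x y) = opH (rinv H opH e' x) (linv H opH e' y))
           \<or> (\<forall>x\<in>H. \<forall>y\<in>H. linv H opH e' (opH x y) = opH (linv H opH e' x) (rinv H opH e' y))"
  shows "(loop_isomorphism G opG H opH C \<longleftrightarrow>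
            autotopism H opH (\<lambda>z. opH b' z) (\<lambda>z. opH z a') (\<lambda>z. z))
       \<and> (loop_isomorphism G opG H opH C \<longrightarrow>
            CIPL G opG e \<and> CIPL H opH e' \<and>
            (\<forall>z\<in>H. opH b' (opH z a') = z) \<and> opH b' a' = e')"
proof -
  have wH1: "loop H opH e'" using wH unfolding WIPL_def by (rule conjunct1)
  have wH2: "\<forall>x\<in>H. \<forall>y\<in>H. \<forall>z\<in>H. opH (opH x y) z = e' \<longrightarrow> opH x (opH y z) = e'"
    using wH unfolding WIPL_def by (rule conjunct2)
  have wG1: "loop G opG e" using wG unfolding WIPL_def by (rule conjunct1)
  interpret H: wl H opH e'
  proof (unfold_locales)
    show "loop H opH e'" by (rule wH1)
  next
    fix x y z assume "x \<in> H" "y \<in> H" "z \<in> H" "opH (opH x y) z = e'"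
    thus "opH x (opH y z) = e'" using wH2 by blast
  qed
  interpret G: lp G opG e by unfold_locales (rule wG1)
  have cH: "(\<forall>x\<in>H. H.li x = H.ri x) \<and> (\<forall>x\<in>H. \<forall>y\<in>H. opH (opH x y) (H.ri x) = y)"
    using inv H.case1 H.case2 by blast
  interpret HC: cl H opH e'
  proof (unfold_locales)
    fix x assume "x \<in> H" thus "H.li x = H.ri x" using cH by blast
  next
    fix x y assume "x \<in> H" "y \<in> H" thus "opH (opH x y) (H.ri x) = y" using cH by blast
  qed
  have bA: "bij_betw A G H" and bB: "bij_betw B G H" and bC: "bij_betw C G H"
    and eq: "\<And>x y. x \<in> G \<Longrightarrow> y \<in> G \<Longrightarrow> opH (A x) (B y) = C (opG x y)"
    using iso unfolding isotopism_def by auto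
  have inA: "x \<in> G \<Longrightarrow> A x \<in> H" for x using bA bij_betwE by blast
  have inB: "x \<in> G \<Longrightarrow> B x \<in> H" for x using bB bij_betwE by blast
  have inC: "x \<in> G \<Longrightarrow> C x \<in> H" for x using bC bij_betwE by blast
  have a'H: "a' \<in> H" and b'H: "b' \<in> H" using a'_def b'_def inA inB G.unit by auto
  have CA: "x \<in> G \<Longrightarrow> C x = opH (A x) b'" for x using eq[of x e] G.unit b'_def by simp
  have CB: "x \<in> G \<Longrightarrow> C x = opH a' (B x)" for x using eq[of e x] G.unit a'_def by simp
  have surjA: "p \<in> H \<Longrightarrow> \<exists>x\<in>G. A x = p" for p using bA unfolding bij_betw_def by auto
  have surjB: "p \<in> H \<Longrightarrow> \<exists>x\<in>G. B x = p" for p using bB unfolding bij_betw_def by auto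
  define P where "P = (\<forall>p\<in>H. \<forall>q\<in>H. opH (opH p b') (opH a' q) = opH p q)"
  define Q where "Q = (\<forall>x\<in>H. \<forall>y\<in>H. opH (opH b' x) (opH y a') = opH x y)"
  have isoP: "loop_isomorphism G opG H opH C \<longleftrightarrow> P"
  proof
    assume L: "loop_isomorphism G opG H opH C"
    show P unfolding P_def
    proof (intro ballI)
      fix p q assume pq: "p \<in> H" "q \<in> H"
      obtain x y where xy: "x \<in> G" "y \<in> G" "A x = p" "B y = q" using surjA surjB pq by metis
      have "opH p q = C (opG x y)" using eq[OF xy(1) xy(2)] by (simp only: xy(3) xy(4))
      also have "\<dots> = opH (C x) (C y)" using L xy unfolding loop_isomorphism_def by blast
      moreover have "C x = opH p b'" using CA xy by simp
      moreover have "C y = opH a' q" using CB xy by simp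
      ultimately show "opH (opH p b') (opH a' q) = opH p q" by simp
    qed
  next
    assume P
    show "loop_isomorphism G opG H opH C" unfolding loop_isomorphism_def
    proof (intro conjI bC ballI)
      fix x y assume xy: "x \<in> G" "y \<in> G"
      show "C (opG x y) = opH (C x) (C y)"
      proof -
        have "opH (opH (A x) b') (opH a' (B y)) = opH (A x) (B y)"
          using \<open>P\<close> xy inA inB unfolding P_def by blast
        thus ?thesis using CA[OF xy(1)] CB[OF xy(2)] eq[OF xy] by simp
      qed
    qed
  qed
  have PQ: "P \<longleftrightarrow> Q"
  proof
    assume P
    have ba: "opH b' a' = e'"
    proof -
      have "opH (opH e' b') (opH a' e') = opH e' e'" using \<open>P\<close> H.unit unfolding P_def by blast
      thus ?thesis using H.unit a'H b'H by simp
    qed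
    have rb: "H.ri b' = a'" using H.rinv_eq ba a'H b'H by blast
    have ra: "H.ri a' = b'" using rb HC.J2 b'H by metis
    have P2: "opH (opH a' X) (opH Y b') = opH X Y" if "X \<in> H" "Y \<in> H" for X Y
    proof -
      have "opH (opH (opH a' X) b') (opH a' (opH Y b')) = opH (opH a' X) (opH Y b')"
        using \<open>P\<close> that H.closed a'H b'H unfolding P_def by blast
      moreover have "opH (opH a' X) b' = X" using HC.cip[of a' X] ra that a'H by simp
      moreover have "opH a' (opH Y b') = Y" using HC.cipb[of a' Y] ra that a'H by simp
      ultimately show ?thesis by simp
    qed
    show Q unfolding Q_def
    proof (intro ballI)
      fix x y assume xy: "x \<in> H" "y \<in> H"
      have "H.ri (opH (opH b' x) (opH y a')) = opH (opH a' (H.ri x)) (opH (H.ri y) b')"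
        using HC.Jhom xy a'H b'H H.closed HC.ri_in ra rb by simp
      also have "\<dots> = opH (H.ri x) (H.ri y)" by (rule P2[OF HC.ri_in[OF xy(1)] HC.ri_in[OF xy(2)]])
      also have "\<dots> = H.ri (opH x y)" by (rule sym, rule HC.Jhom[OF xy])
      finally have "H.ri (opH (opH b' x) (opH y a')) = H.ri (opH x y)" .
      thus "opH (opH b' x) (opH y a') = opH x y"
        by (rule HC.Jinj[OF H.closed[OF H.closed[OF b'H xy(1)] H.closed[OF xy(2) a'H]] H.closed[OF xy]])
    qed
  next
    assume Q
    have ba: "opH b' a' = e'"
    proof -
      have "opH (opH b' e') (opH e' a') = opH e' e'" using \<open>Q\<close> H.unit unfolding Q_def by blast
      thus ?thesis using H.unit a'H b'H by simp
    qed
    have rb: "H.ri b' = a'" using H.rinv_eq ba a'H b'H by blast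
    have ra: "H.ri a' = b'" using rb HC.J2 b'H by metis
    have Q2: "opH (opH X a') (opH b' Y) = opH X Y" if "X \<in> H" "Y \<in> H" for X Y
    proof -
      have "opH (opH b' (opH X a')) (opH (opH b' Y) a') = opH (opH X a') (opH b' Y)"
        using \<open>Q\<close> that H.closed a'H b'H unfolding Q_def by blast
      moreover have "opH b' (opH X a') = X" using HC.cipb[of b' X] rb that b'H by simp
      moreover have "opH (opH b' Y) a' = Y" using HC.cip[of b' Y] rb that b'H by simp
      ultimately show ?thesis by simp
    qed
    show P unfolding P_def
    proof (intro ballI)
      fix x y assume xy: "x \<in> H" "y \<in> H"
      have "H.ri (opH (opH x b') (opH a' y)) = opH (opH (H.ri x) a') (opH b' (H.ri y))"
        using HC.Jhom xy a'H b'H H.closed HC.ri_in ra rb by simp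
      also have "\<dots> = opH (H.ri x) (H.ri y)" by (rule Q2[OF HC.ri_in[OF xy(1)] HC.ri_in[OF xy(2)]])
      also have "\<dots> = H.ri (opH x y)" by (rule sym, rule HC.Jhom[OF xy])
      finally have "H.ri (opH (opH x b') (opH a' y)) = H.ri (opH x y)" .
      thus "opH (opH x b') (opH a' y) = opH x y"
        by (rule HC.Jinj[OF H.closed[OF H.closed[OF xy(1) b'H] H.closed[OF a'H xy(2)]] H.closed[OF xy]])
    qed
  qed
  have QA: "Q \<longleftrightarrow> autotopism H opH (\<lambda>z. opH b' z) (\<lambda>z. opH z a') (\<lambda>z. z)"
    unfolding autotopism_def isotopism_def Q_def
    using H.bijL[OF b'H] H.bijR[OF a'H] bij_betw_id[unfolded id_def] by auto
  have CIPH: "CIPL H opH e'" unfolding CIPL_def using H.lp HC.cip by blast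
  have rest: "CIPL G opG e \<and> (\<forall>z\<in>H. opH b' (opH z a') = z) \<and> opH b' a' = e'"
    if L: "loop_isomorphism G opG H opH C"
  proof -
    have hom: "\<And>x y. x \<in> G \<Longrightarrow> y \<in> G \<Longrightarrow> C (opG x y) = opH (C x) (C y)"
      using L unfolding loop_isomorphism_def by blast
    have injC: "inj_on C G" using bC bij_betw_def by blast
    have Ce: "C e = e'"
    proof -
      have "opH (C e) (C e) = opH (C e) e'" using hom[of e e] G.unit inC by simp
      thus ?thesis using H.lcancel inC G.unit H.unit by blast
    qed
    have Cr: "C (G.ri x) = H.ri (C x)" if "x \<in> G" for x
    proof -
      have "opH (C x) (C (G.ri x)) = e'" using hom[of x "G.ri x"] G.rinv that Ce by simp
      thus ?thesis using H.rinv_eq inC G.rinv that by metis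
    qed
    have "opG (opG x y) (G.ri x) = y" if "x \<in> G" "y \<in> G" for x y
    proof -
      have "C (opG (opG x y) (G.ri x)) = C y"
        using hom G.closed G.rinv that Cr HC.cip inC by simp
      thus ?thesis using injC G.closed G.rinv that unfolding inj_on_def by blast
    qed
    hence "CIPL G opG e" unfolding CIPL_def using G.lp by blast
    moreover have Q using L isoP PQ by blast
    note \<open>Q\<close>
    have ba: "opH b' a' = e'"
    proof -
      have "opH (opH b' e') (opH e' a') = opH e' e'" using \<open>Q\<close> H.unit unfolding Q_def by blast
      thus ?thesis using H.unit a'H b'H by simp
    qed
    have rb: "H.ri b' = a'" using H.rinv_eq ba a'H b'H by blast
    have "\<forall>z\<in>H. opH b' (opH z a') = z" using HC.cipb b'H rb by metis
    ultimately show ?thesis using ba by blast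
  qed
  show ?thesis using isoP PQ QA CIPH rest by blast
qed

end
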